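(* Let $(\mathcal A,\varphi,\mathcal F,\Phi)$ be a ncps of type B$'$ with associated infinitesimal ncps $(\mathcal B,\varphi,\varphi')$, let $q\in\mathcal F$ with $q^2=q$, $\Phi(q)=1$ and $(\mathcal A,\{q\})$ cyclic-antimonotone independent, let $p:=1_{\mathcal B}-q$, and let $\psi:=\varphi|_{p\mathcal Bp}$, $\psi':=(\varphi+\varphi')|_{p\mathcal Bp}$ on the algebra $p\mathcal Bp$ with unit $p$. Let $a\in\mathcal A$, let $\mu$ be the distribution of $a$ w.r.t. $\varphi$ and $\tau$ the inverse Markov–Krein transform of $\mu$. Then the infinitesimal distribution of $\tilde a:=pap$ with respect to $(p\mathcal Bp,\psi,\psi')$ is $(\mu,\mu-\tau)$.
   Context: Ncps of type B$'$ $(\mathcal A,\varphi,\mathcal F,\Phi)$: $\mathcal A$ unital complex algebra, $\varphi(1_{\mathcal A})=1$, $\mathcal F$ an algebra which is an $\mathcal A$-bimodule compatible with its multiplication, $\Phi:\mathcal F\to\mathbb C$ linear. $\mathcal B=\mathcal A\oplus\mathcal F$ with product $(a_1,f_1)(a_2,f_2)=(a_1a_2,a_1f_2+f_1a_2+f_1f_2)$, unit $1_{\mathcal A}$; $\varphi(a+f):=\varphi(a)$, $\varphi'(a+f):=\Phi(f)$. Cyclic-antimonotone independence of $(\mathcal A,\{q\})$: $\Phi(a_0qa_1\cdots a_{n-1}qa_n)=\varphi(a_0a_n)\prod_{i=1}^{n-1}\varphi(a_i)\Phi(q^n)$ for $a_l\in\mathcal A$. The distribution of $a$ w.r.t. $\varphi$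 is $\mu(x^n)=\varphi(a^n)$ on $\mathbb C[x]$. The infinitesimal distribution of $\tilde a$ in $(p\mathcal Bp,\psi,\psi')$ is the pair $x^n\mapsto\psi(\tilde a^n)$, $x^n\mapsto\psi'(\tilde a^n)$ with $\tilde a^0=p$. With $G_\mu(z)=\sum_{n\ge0}\mu(x^n)z^{-n-1}$ as a formal series, the inverse Markov–Krein transform of $\mu$ is the linear functional $\tau$ on $\mathbb C[x]$ determined by $\frac{d}{dz}G_\mu(z)=-G_\tau(z)G_\mu(z)$. *)

theory Defs
  imports "HOL-Computational_Algebra.Formal_Power_Series"
begin

definition cplx_algebra :: "(complex \<Rightarrow> 'r::ring \<Rightarrow> 'r) \<Rightarrow> bool" where
  "cplx_algebra sm \<longleftrightarrow>
     (\<forall>c x y. sm c (x + y) = sm c x + sm c y) \<and>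
     (\<forall>c d x. sm (c + d) x = sm c x + sm d x) \<and>
     (\<forall>c d x. sm (c * d) x = sm c (sm d x)) \<and>
     (\<forall>x. sm 1 x = x) \<and>
     (\<forall>c x y. sm c (x * y) = sm c x * y \<and> sm c (x * y) = x * sm c y)"

definition cplx_linear :: "(complex \<Rightarrow> 'r::ring \<Rightarrow> 'r) \<Rightarrow> ('r \<Rightarrow> complex) \<Rightarrow> bool" where
  "cplx_linear sm f \<longleftrightarrow> (\<forall>x y. f (x + y) = f x + f y) \<and> (\<forall>c x. f (sm c x) = c * f x)"

definition compat_bimodule ::
  "(complex \<Rightarrow> 'a::ring_1 \<Rightarrow> 'a) \<Rightarrow> (complex \<Rightarrow> 'f::ring \<Rightarrow> 'f) \<Rightarrow>
   ('a \<Rightarrow> 'f \<Rightarrow> 'f) \<Rightarrow> ('f \<Rightarrow> 'a \<Rightarrow> 'f) \<Rightarrow> bool" where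
  "compat_bimodule smA smF L R \<longleftrightarrow>
     (\<forall>a b f. L (a + b) f = L a f + L b f) \<and>
     (\<forall>a f g. L a (f + g) = L a f + L a g) \<and>
     (\<forall>a b f. R f (a + b) = R f a + R f b) \<and>
     (\<forall>a f g. R (f + g) a = R f a + R g a) \<and>
     (\<forall>f. L 1 f = f) \<and> (\<forall>f. R f 1 = f) \<and>
     (\<forall>a b f. L (a * b) f = L a (L b f)) \<and>
     (\<forall>a b f. R f (a * b) = R (R f a) b) \<and>
     (\<forall>a b f. L a (R f b) = R (L a f) b) \<and>
     (\<forall>c a f. smF c (L a f) = L (smA c a) f \<and> smF c (L a f) = L a (smF c f)) \<and>
     (\<forall>c a f. smF c (R f a) = R f (smA c a) \<and> smF c (R f a) = R (smF c f) a) \<and>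
     (\<forall>a f g. L a (f * g) = L a f * g) \<and>
     (\<forall>a f g. R (f * g) a = f * R g a) \<and>
     (\<forall>a f g. R f a * g = f * L a g)"

definition ncps_typeB' ::
  "(complex \<Rightarrow> 'a::ring_1 \<Rightarrow> 'a) \<Rightarrow> ('a \<Rightarrow> complex) \<Rightarrow> (complex \<Rightarrow> 'f::ring \<Rightarrow> 'f) \<Rightarrow>
   ('a \<Rightarrow> 'f \<Rightarrow> 'f) \<Rightarrow> ('f \<Rightarrow> 'a \<Rightarrow> 'f) \<Rightarrow> ('f \<Rightarrow> complex) \<Rightarrow> bool" where
  "ncps_typeB' smA \<phi> smF L R \<Phi> \<longleftrightarrow>
     cplx_algebra smA \<and> cplx_algebra smF \<and> compat_bimodule smA smF L R \<and>
     cplx_linear smA \<phi> \<and> \<phi> 1 = 1 \<and> cplx_linear smF \<Phi>"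

(* The algebra B = A \<oplus> F, elements represented as pairs (a, f) = a + f *)
definition Bmul :: "('a::ring_1 \<Rightarrow> 'f::ring \<Rightarrow> 'f) \<Rightarrow> ('f \<Rightarrow> 'a \<Rightarrow> 'f) \<Rightarrow>
    'a \<times> 'f \<Rightarrow> 'a \<times> 'f \<Rightarrow> 'a \<times> 'f" where
  "Bmul L R x y = (fst x * fst y, L (fst x) (snd y) + R (snd x) (fst y) + snd x * snd y)"

(* f^n for n \<ge> 1 in the (possibly non-unital) algebra F *)
fun fpow :: "'f::ring \<Rightarrow> nat \<Rightarrow> 'f" where
  "fpow f 0 = 0"
| "fpow f (Suc 0) = f"
| "fpow f (Suc (Suc n)) = f * fpow f (Suc n)"

(* the word a_0 q a_1 q ... q a_n in B, for the list [a_0,...,a_n] *)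
fun cyc_word :: "('a::ring_1 \<Rightarrow> 'f::ring \<Rightarrow> 'f) \<Rightarrow> ('f \<Rightarrow> 'a \<Rightarrow> 'f) \<Rightarrow> 'f \<Rightarrow> 'a list \<Rightarrow> 'a \<times> 'f" where
  "cyc_word L R q [] = (1, 0)"
| "cyc_word L R q [a] = (a, 0)"
| "cyc_word L R q (a # b # as) = Bmul L R (Bmul L R (a, 0) (0, q)) (cyc_word L R q (b # as))"

definition cyc_antimono_indep ::
  "('a::ring_1 \<Rightarrow> complex) \<Rightarrow> ('f::ring \<Rightarrow> complex) \<Rightarrow> ('a \<Rightarrow> 'f \<Rightarrow> 'f) \<Rightarrow> ('f \<Rightarrow> 'a \<Rightarrow> 'f) \<Rightarrow> 'f \<Rightarrow> bool" where
  "cyc_antimono_indep \<phi> \<Phi> L R q \<longleftrightarrow>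
     (\<forall>as. 2 \<le> length as \<longrightarrow>
        \<Phi> (snd (cyc_word L R q as)) =
          \<phi> (hd as * last as) * prod_list (map \<phi> (butlast (tl as))) * \<Phi> (fpow q (length as - 1)))"

(* powers in the corner algebra pBp, with x^0 = p *)
fun cpow :: "('a::ring_1 \<Rightarrow> 'f::ring \<Rightarrow> 'f) \<Rightarrow> ('f \<Rightarrow> 'a \<Rightarrow> 'f) \<Rightarrow> 'a \<times> 'f \<Rightarrow> 'a \<times> 'f \<Rightarrow> nat \<Rightarrow> 'a \<times> 'f" where
  "cpow L R p x 0 = p"
| "cpow L R p x (Suc n) = Bmul L R x (cpow L R p x n)"

(* Linear functionals on C[x] are represented by their moment sequences n \<mapsto> \<mu>(x^n).
   Formal series in z^{-1} are represented as fps in the variable w = z^{-1}: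
   coefficient k of the fps is the coefficient of z^{-k}. *)
definition Cauchy_series :: "(nat \<Rightarrow> complex) \<Rightarrow> complex fps" where
  "Cauchy_series \<mu> = Abs_fps (\<lambda>k. if k = 0 then 0 else \<mu> (k - 1))"

(* formal d/dz of \<Sum> c_k z^{-k}, namely \<Sum> -k c_k z^{-k-1} *)
definition zderiv :: "complex fps \<Rightarrow> complex fps" where
  "zderiv F = Abs_fps (\<lambda>k. - of_nat (k - 1) * fps_nth F (k - 1))"

definition inv_markov_krein :: "(nat \<Rightarrow> complex) \<Rightarrow> (nat \<Rightarrow> complex) \<Rightarrow> bool" where
  "inv_markov_krein \<mu> \<tau> \<longleftrightarrow> zderiv (Cauchy_series \<mu>) = - (Cauchy_series \<tau> * Cauchy_series \<mu>)"

end

theory Submission imports Defs begin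
lemma comb:
  fixes \<mu> \<tau> :: "nat \<Rightarrow> complex" and b :: "nat \<Rightarrow> nat \<Rightarrow> nat \<Rightarrow> complex"
    and af :: "nat \<Rightarrow> nat \<Rightarrow> complex"
  assumes m0: "\<mu> 0 = 1"
    and b0: "\<And>k l. b 0 k l = \<mu> (k + l)"
    and bS: "\<And>j k l. b (Suc j) k l = b j (Suc k) l - \<mu> (Suc k) * b j 0 l"
    and af0: "\<And>k. af 0 k = 0"
    and afS: "\<And>j k. af (Suc j) k = af j (Suc k) - b j 0 (Suc k)"
    and tau: "\<And>m. (\<Sum>i\<le>m. \<tau> i * \<mu> (m - i)) = of_nat (m + 1) * \<mu> m"
  shows "\<tau> n = b n 0 0 - af n 0"
proof -
  have bf: "b j k l = \<mu> (j + k + l) - (\<Sum>i<j. \<mu> (k + j - i) * b i 0 l)" for j k l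
  proof (induction j arbitrary: k)
    case 0 then show ?case by (simp add: b0)
  next
    case (Suc j)
    show ?case using Suc[of "Suc k"] Suc[of 0] by (simp add: bS algebra_simps)
  qed
  have conv: "(\<Sum>i\<le>j. \<mu> (j - i) * b i 0 l) = \<mu> (j + l)" for j l
    using bf[of j 0 l] by (simp add: lessThan_Suc_atMost[symmetric] m0)
  have aff: "af n k = - (\<Sum>j<n. b j 0 (k + n - j))" for n k
  proof (induction n arbitrary: k)
    case 0 then show ?case by (simp add: af0)
  next
    case (Suc n)
    show ?case using Suc[of "Suc k"] by (simp add: afS)
  qed
  define t where "t n = (\<Sum>j\<le>n. b j 0 (n - j))" for n
  have teq: "t n = b n 0 0 - af n 0" for n
    by (simp add: t_def aff lessThan_Suc_atMost[symmetric])
  have tconv: "(\<Sum>i\<le>m. t i * \<mu> (m - i)) = of_nat (m + 1) * \<mu> m" for m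
  proof -
    have "(\<Sum>i\<le>m. t i * \<mu> (m - i)) = (\<Sum>i\<le>m. \<Sum>j\<le>i. \<mu> (m - i) * b j 0 (i - j))"
      by (simp add: t_def sum_distrib_left sum_distrib_right mult.commute)
    also have "\<dots> = (\<Sum>(j,l)\<in>{(j,l). j + l \<le> m}. \<mu> (m - (j + l)) * b j 0 l)"
      by (subst sum.triangle_reindex_eq) simp
    also have "\<dots> = (\<Sum>(l,j)\<in>{(l,j). l + j \<le> m}. \<mu> (m - (j + l)) * b j 0 l)"
      by (rule sum.reindex_bij_witness[where i="\<lambda>(l,j). (j,l)" and j="\<lambda>(j,l). (l,j)"]) auto
    also have "{(l,j). l + j \<le> m} = Sigma {..m} (\<lambda>l. {..m - l})" by auto
    also have "(\<Sum>(l,j)\<in>Sigma {..m} (\<lambda>l. {..m - l}). \<mu> (m - (j + l)) * b j 0 l)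
        = (\<Sum>l\<le>m. \<Sum>j\<le>m - l. \<mu> (m - l - j) * b j 0 l)"
      by (subst sum.Sigma[symmetric]) (auto simp: algebra_simps intro!: sum.cong)
    also have "\<dots> = (\<Sum>l\<le>m. \<mu> m)"
    proof (rule sum.cong)
      fix l assume "l \<in> {..m}"
      then have "m - l + l = m" by simp
      then show "(\<Sum>j\<le>m - l. \<mu> (m - l - j) * b j 0 l) = \<mu> m"
        using conv[of "m - l" l] by simp
    qed simp
    finally show ?thesis by simp
  qed
  have "\<tau> n = t n"
  proof (induction n rule: less_induct)
    case (less n)
    have s: "(\<Sum>i<n. \<tau> i * \<mu> (n - i)) = (\<Sum>i<n. t i * \<mu> (n - i))"
      by (rule sum.cong) (use less in auto)
    have "(\<Sum>i\<le>n. \<tau> i * \<mu> (n - i)) = (\<Sum>i\<le>n. t i * \<mu> (n - i))"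
      using tau[of n] tconv[of n] by simp
    then show ?case using s by (simp add: lessThan_Suc_atMost[symmetric] m0)
  qed
  then show ?thesis using teq by simp
qed

lemma mk:
  assumes "inv_markov_krein \<mu> \<tau>"
  shows "(\<Sum>i\<le>m. \<tau> i * \<mu> (m - i)) = of_nat (m + 1) * \<mu> m"
proof -
  have "fps_nth (zderiv (Cauchy_series \<mu>)) (Suc (Suc m)) =
        - fps_nth (Cauchy_series \<tau> * Cauchy_series \<mu>) (Suc (Suc m))"
    using assms unfolding inv_markov_krein_def by simp
  also have "fps_nth (Cauchy_series \<tau> * Cauchy_series \<mu>) (Suc (Suc m))
      = (\<Sum>i=0..Suc (Suc m). fps_nth (Cauchy_series \<tau>) i * fps_nth (Cauchy_series \<mu>) (Suc (Suc m) - i))"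
    by (rule fps_mult_nth)
  also have "\<dots> = (\<Sum>i=0..Suc m. fps_nth (Cauchy_series \<tau>) (Suc i) * fps_nth (Cauchy_series \<mu>) (Suc (Suc m) - Suc i))"
    by (subst sum.atLeast0_atMost_Suc_shift) (simp add: Cauchy_series_def)
  also have "\<dots> = (\<Sum>i=0..m. fps_nth (Cauchy_series \<tau>) (Suc i) * fps_nth (Cauchy_series \<mu>) (Suc (Suc m) - Suc i))"
    by (subst sum.atLeast0_atMost_Suc) (simp add: Cauchy_series_def)
  also have "\<dots> = (\<Sum>i\<le>m. \<tau> i * \<mu> (m - i))"
    by (simp add: atLeast0AtMost Cauchy_series_def Suc_diff_le)
  finally show ?thesis by (simp add: zderiv_def Cauchy_series_def)
qed

locale Bset =
  fixes smA :: "complex \<Rightarrow> 'a::ring_1 \<Rightarrow> 'a" and \<phi> :: "'a \<Rightarrow> complex"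
    and smF :: "complex \<Rightarrow> 'f::ring \<Rightarrow> 'f"
    and L :: "'a \<Rightarrow> 'f \<Rightarrow> 'f" and R :: "'f \<Rightarrow> 'a \<Rightarrow> 'f" and \<Phi> :: "'f \<Rightarrow> complex"
    and q :: 'f
  assumes ncps: "ncps_typeB' smA \<phi> smF L R \<Phi>"
    and idem: "q * q = q" and trace: "\<Phi> q = 1"
    and indep: "cyc_antimono_indep \<phi> \<Phi> L R q"
begin

abbreviation bm (infixr "\<odot>" 70) where "x \<odot> y \<equiv> Bmul L R x y"

lemma cb: "compat_bimodule smA smF L R" using ncps by (simp add: ncps_typeB'_def)

lemma L_add1: "L (a + b) f = L a f + L b f" using cb by (simp add: compat_bimodule_def)
lemma L_add2: "L a (f + g) = L a f + L a g" using cb by (simp add: compat_bimodule_def)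
lemma R_add1: "R f (a + b) = R f a + R f b" using cb by (simp add: compat_bimodule_def)
lemma R_add2: "R (f + g) a = R f a + R g a" using cb by (simp add: compat_bimodule_def)
lemma L_one[simp]: "L 1 f = f" using cb by (simp add: compat_bimodule_def)
lemma R_one[simp]: "R f 1 = f" using cb by (simp add: compat_bimodule_def)
lemma L_mult: "L (a * b) f = L a (L b f)" using cb by (simp add: compat_bimodule_def)
lemma R_mult: "R f (a * b) = R (R f a) b" using cb by (simp add: compat_bimodule_def)
lemma LR: "L a (R f b) = R (L a f) b" using cb by (simp add: compat_bimodule_def)
lemma Lm: "L a (f * g) = L a f * g" using cb by (simp add: compat_bimodule_def)
lemma Rm: "R (f * g) a = f * R g a" using cb by (simp add: compat_bimodule_def)
lemma RL: "R f a * g = f * L a g" using cb by (simp add: compat_bimodule_def)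

lemma L_0f[simp]: "L 0 f = 0" using L_add1[of 0 0 f] by simp
lemma L_f0[simp]: "L a 0 = 0" using L_add2[of a 0 0] by simp
lemma R_0f[simp]: "R 0 a = 0" using R_add2[of 0 0 a] by simp
lemma R_f0[simp]: "R f 0 = 0" using R_add1[of f 0 0] by simp
lemma L_neg[simp]: "L a (- f) = - L a f"
proof -
  have "L a f + L a (- f) = 0" using L_add2[of a f "- f"] by simp
  then show ?thesis by (metis minus_unique)
qed
lemma R_neg[simp]: "R (- f) a = - R f a"
proof -
  have "R f a + R (- f) a = 0" using R_add2[of f "- f" a] by simp
  then show ?thesis by (metis minus_unique)
qed
lemma L_diff[simp]: "L a (f - g) = L a f - L a g"
  using L_add2[of a f "- g"] by simp
lemma R_diff[simp]: "R (f - g) a = R f a - R g a"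
  using R_add2[of f "- g" a] by simp

lemma Phi_add: "\<Phi> (x + y) = \<Phi> x + \<Phi> y" using ncps by (simp add: ncps_typeB'_def cplx_linear_def)
lemma Phi_0[simp]: "\<Phi> 0 = 0" using Phi_add[of 0 0] by simp
lemma Phi_diff: "\<Phi> (x - y) = \<Phi> x - \<Phi> y"
  using Phi_add[of "x - y" y] by (simp add: algebra_simps)
lemma phi_1: "\<phi> 1 = 1" using ncps by (simp add: ncps_typeB'_def)

lemma bassoc: "(x \<odot> y) \<odot> z = x \<odot> (y \<odot> z)"
  by (cases x; cases y; cases z)
     (simp add: Bmul_def L_add2 R_add2 L_mult R_mult LR Lm Rm RL distrib_left distrib_right
       mult.assoc add_ac)

lemma bm_AA[simp]: "(x, 0) \<odot> (y, 0) = (x * y, 0)" by (simp add: Bmul_def)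
lemma bm_1l[simp]: "(1, 0) \<odot> y = y" by (simp add: Bmul_def)
lemma bm_1r[simp]: "y \<odot> (1, 0) = y" by (simp add: Bmul_def)
lemma bm_AAz: "(x, 0) \<odot> ((y, 0) \<odot> z) = (x * y, 0) \<odot> z" by (simp flip: bassoc)

definition Q :: "'a \<times> 'f" where "Q = (0, q)"
definition pp :: "'a \<times> 'f" where "pp = (1, - q)"

lemma fst_bm[simp]: "fst (x \<odot> y) = fst x * fst y" by (simp add: Bmul_def)

lemma split_pp: "\<Phi> (snd (Y \<odot> pp \<odot> Z)) = \<Phi> (snd (Y \<odot> Z)) - \<Phi> (snd (Y \<odot> Q \<odot> Z))"
proof -
  obtain y f where Y: "Y = (y, f)" by (cases Y)
  obtain z g where Z: "Z = (z, g)" by (cases Z)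
  have "snd (Y \<odot> pp \<odot> Z) = snd (Y \<odot> Z) - snd (Y \<odot> Q \<odot> Z)"
    by (simp add: Y Z Bmul_def pp_def Q_def L_add2 R_add2 L_mult R_mult LR Lm Rm RL
        distrib_left distrib_right mult.assoc algebra_simps)
  then show ?thesis by (simp add: Phi_diff)
qed

lemma fpow_qS: "fpow q (Suc n) = q"
  by (induction n) (simp_all add: idem)
lemma fpow_q: "n \<ge> 1 \<Longrightarrow> fpow q n = q"
  using fpow_qS[of "n - 1"] by simp

abbreviation cw where "cw \<equiv> cyc_word L R q"

lemma indep': "length as \<ge> 2 \<Longrightarrow>
   \<Phi> (snd (cw as)) = \<phi> (hd as * last as) * prod_list (map \<phi> (butlast (tl as)))"
  using indep unfolding cyc_antimono_indep_def by (simp add: fpow_q trace)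

lemma cw_cons: "xs \<noteq> [] \<Longrightarrow> (c, 0) \<odot> Q \<odot> cw xs = cw (c # xs)"
  by (cases xs) (simp_all add: Q_def bassoc)

lemma key0: "cs \<noteq> [] \<Longrightarrow>
   \<Phi> (snd ((c, 0) \<odot> Q \<odot> cw (c0 # cs))) = \<phi> c0 * \<Phi> (snd ((c, 0) \<odot> Q \<odot> cw cs))"
proof -
  assume cs: "cs \<noteq> []"
  have "(c, 0) \<odot> Q \<odot> cw (c0 # cs) = cw (c # c0 # cs)" by (rule cw_cons) simp
  moreover have "(c, 0) \<odot> Q \<odot> cw cs = cw (c # cs)" by (rule cw_cons[OF cs])
  moreover have "length (c # cs) \<ge> 2" using cs by (cases cs) auto
  ultimately show ?thesis using cs by (simp add: indep' del: cyc_word.simps)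
qed

fun Rp :: "'a \<Rightarrow> nat \<Rightarrow> 'a \<times> 'f" where
  "Rp a 0 = (1, 0)"
| "Rp a (Suc n) = Rp a n \<odot> pp \<odot> (a, 0)"

lemma W: "cs \<noteq> [] \<Longrightarrow>
  \<Phi> (snd (Rp a n \<odot> (x, 0) \<odot> Q \<odot> cw (c0 # cs))) = \<phi> c0 * \<Phi> (snd (Rp a n \<odot> (x, 0) \<odot> Q \<odot> cw cs))"
proof (induction n arbitrary: x c0 cs)
  case 0 then show ?case by (simp add: key0)
next
  case (Suc n)
  have e1: "(a, 0) \<odot> (x, 0) \<odot> Q \<odot> cw zs = (a * x, 0) \<odot> Q \<odot> cw zs" for zs
    by (simp add: bm_AAz)
  have e2: "Rp a n \<odot> Q \<odot> (a * x, 0) \<odot> Q \<odot> cw zs = Rp a n \<odot> (1, 0) \<odot> Q \<odot> cw (a * x # zs)"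
    if "zs \<noteq> []" for zs using cw_cons[OF that] by simp
  have s: "\<Phi> (snd (Rp a (Suc n) \<odot> (x, 0) \<odot> Q \<odot> cw zs)) =
     \<Phi> (snd (Rp a n \<odot> (a * x, 0) \<odot> Q \<odot> cw zs)) - \<phi> (a * x) * \<Phi> (snd (Rp a n \<odot> (1, 0) \<odot> Q \<odot> cw zs))"
    if "zs \<noteq> []" for zs
    using split_pp[of "Rp a n" "(a, 0) \<odot> (x, 0) \<odot> Q \<odot> cw zs"] Suc.IH[of zs 1 "a * x"] that
    by (simp add: bassoc e1 e2)
  have i1: "\<Phi> (snd (Rp a n \<odot> (a * x, 0) \<odot> Q \<odot> cw (c0 # cs))) =
      \<phi> c0 * \<Phi> (snd (Rp a n \<odot> (a * x, 0) \<odot> Q \<odot> cw cs))"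
    using Suc.IH[of cs "a * x" c0] Suc.prems by blast
  have i2: "\<Phi> (snd (Rp a n \<odot> (1, 0) \<odot> Q \<odot> cw (c0 # cs))) =
      \<phi> c0 * \<Phi> (snd (Rp a n \<odot> (1, 0) \<odot> Q \<odot> cw cs))"
    using Suc.IH[of cs 1 c0] Suc.prems by blast
  have s1: "\<Phi> (snd (Rp a (Suc n) \<odot> (x, 0) \<odot> Q \<odot> cw (c0 # cs))) =
     \<Phi> (snd (Rp a n \<odot> (a * x, 0) \<odot> Q \<odot> cw (c0 # cs))) - \<phi> (a * x) * \<Phi> (snd (Rp a n \<odot> (1, 0) \<odot> Q \<odot> cw (c0 # cs)))"
    by (rule s) simp
  show ?case unfolding s1 s[OF Suc.prems] i1 i2
    by (simp add: right_diff_distrib mult.left_commute)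
qed

definition Bf where "Bf a j x c = \<Phi> (snd (Rp a j \<odot> (x, 0) \<odot> Q \<odot> (c, 0)))"
definition Af where "Af a j x = \<Phi> (snd (Rp a j \<odot> (x, 0)))"

lemma Bf0: "Bf a 0 x c = \<phi> (x * c)"
proof -
  have "(x, 0) \<odot> Q \<odot> (c, 0) = cw [x, c]" by (simp add: Q_def bassoc)
  then show ?thesis by (simp add: Bf_def indep' del: cyc_word.simps)
qed

lemma BfS: "Bf a (Suc j) x c = Bf a j (a * x) c - \<phi> (a * x) * Bf a j 1 c"
proof -
  have e: "Rp a j \<odot> Q \<odot> (a * x, 0) \<odot> Q \<odot> (c, 0) = Rp a j \<odot> (1, 0) \<odot> Q \<odot> cw [a * x, c]"
    using cw_cons[of "[c]" "a * x"] by simp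
  have "\<Phi> (snd (Rp a j \<odot> (1, 0) \<odot> Q \<odot> cw [a * x, c])) = \<phi> (a * x) * \<Phi> (snd (Rp a j \<odot> (1, 0) \<odot> Q \<odot> cw [c]))"
    by (rule W) simp
  then show ?thesis
    using split_pp[of "Rp a j" "(a, 0) \<odot> (x, 0) \<odot> Q \<odot> (c, 0)"]
    by (simp add: Bf_def bassoc bm_AAz e)
qed

lemma Af0: "Af a 0 x = 0" by (simp add: Af_def)

lemma AfS: "Af a (Suc j) x = Af a j (a * x) - Bf a j 1 (a * x)"
  using split_pp[of "Rp a j" "(a, 0) \<odot> (x, 0)"]
  by (simp add: Af_def Bf_def bassoc)

lemma pp_pp: "pp \<odot> pp = pp"
  by (simp add: pp_def Bmul_def idem)

lemma Rp_comm: "pp \<odot> (a, 0) \<odot> Rp a n = Rp a n \<odot> pp \<odot> (a, 0)"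
  by (induction n) (simp_all flip: bassoc)

lemma pp_Rp: "pp \<odot> Rp a n \<odot> pp = Rp a n \<odot> pp"
proof (cases n)
  case 0 then show ?thesis by (simp add: pp_pp)
next
  case (Suc m)
  then have "Rp a n = pp \<odot> (a, 0) \<odot> Rp a m" by (simp add: Rp_comm)
  then show ?thesis by (simp add: pp_pp flip: bassoc)
qed

lemma cpow_Rp: "cpow L R pp ((pp \<odot> (a, 0)) \<odot> pp) n = Rp a n \<odot> pp"
proof (induction n)
  case 0 then show ?case by simp
next
  case (Suc n)
  have "cpow L R pp ((pp \<odot> (a, 0)) \<odot> pp) (Suc n) = pp \<odot> (a, 0) \<odot> (pp \<odot> Rp a n \<odot> pp)"
    by (simp only: cpow.simps Suc) (simp add: bassoc)
  also have "\<dots> = pp \<odot> (a, 0) \<odot> (Rp a n \<odot> pp)" by (simp only: pp_Rp)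
  also have "\<dots> = (pp \<odot> (a, 0) \<odot> Rp a n) \<odot> pp" by (simp only: bassoc)
  also have "\<dots> = (Rp a n \<odot> pp \<odot> (a, 0)) \<odot> pp" by (simp only: Rp_comm)
  also have "\<dots> = Rp a (Suc n) \<odot> pp" by simp
  finally show ?case .
qed

lemma fst_Rp: "fst (Rp a n) = a ^ n"
  by (induction n) (simp_all add: pp_def power_commutes)

lemma snd_final: "\<Phi> (snd (Rp a n \<odot> pp)) = Af a n 1 - Bf a n 1 1"
  using split_pp[of "Rp a n" "(1, 0)"] by (simp add: Af_def Bf_def)

end
theorem proposition5p4:
  fixes smA :: "complex \<Rightarrow> 'a::ring_1 \<Rightarrow> 'a" and \<phi> :: "'a \<Rightarrow> complex"
    and smF :: "complex \<Rightarrow> 'f::ring \<Rightarrow> 'f"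
    and L :: "'a \<Rightarrow> 'f \<Rightarrow> 'f" and R :: "'f \<Rightarrow> 'a \<Rightarrow> 'f" and \<Phi> :: "'f \<Rightarrow> complex"
    and q :: 'f and p ta :: "'a \<times> 'f" and a :: 'a and \<mu> \<tau> :: "nat \<Rightarrow> complex"
  assumes ncps: "ncps_typeB' smA \<phi> smF L R \<Phi>"
    and idem: "q * q = q" and trace: "\<Phi> q = 1"
    and indep: "cyc_antimono_indep \<phi> \<Phi> L R q"
    and p_def: "p = (1, - q)"
    and at_def: "ta = Bmul L R (Bmul L R p (a, 0)) p"
    and mu_def: "\<forall>n. \<mu> n = \<phi> (a ^ n)"
    and tau: "inv_markov_krein \<mu> \<tau>"
  shows "\<forall>n. \<phi> (fst (cpow L R p ta n)) = \<mu> n \<and>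
             \<phi> (fst (cpow L R p ta n)) + \<Phi> (snd (cpow L R p ta n)) = \<mu> n - \<tau> n"
proof
  fix n
  interpret Bset smA \<phi> smF L R \<Phi> q using ncps idem trace indep by unfold_locales
  have cp: "cpow L R p ta n = Rp a n \<odot> pp"
    unfolding at_def p_def pp_def[symmetric] by (rule cpow_Rp)
  have m0: "\<mu> 0 = 1" using mu_def phi_1 by simp
  have t: "\<tau> n = Bf a n (a ^ 0) (a ^ 0) - Af a n (a ^ 0)"
  proof (rule comb[where b="\<lambda>j k l. Bf a j (a ^ k) (a ^ l)" and af="\<lambda>j k. Af a j (a ^ k)"])
    show "\<mu> 0 = 1" by (rule m0)
    show "Bf a 0 (a ^ k) (a ^ l) = \<mu> (k + l)" for k l by (simp add: Bf0 mu_def power_add)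
    show "Bf a (Suc j) (a ^ k) (a ^ l) = Bf a j (a ^ Suc k) (a ^ l) - \<mu> (Suc k) * Bf a j (a ^ 0) (a ^ l)"
      for j k l by (simp add: BfS mu_def)
    show "Af a 0 (a ^ k) = 0" for k by (simp add: Af0)
    show "Af a (Suc j) (a ^ k) = Af a j (a ^ Suc k) - Bf a j (a ^ 0) (a ^ Suc k)" for j k
      by (simp add: AfS)
    show "(\<Sum>i\<le>m. \<tau> i * \<mu> (m - i)) = of_nat (m + 1) * \<mu> m" for m by (rule mk[OF tau])
  qed
  show "\<phi> (fst (cpow L R p ta n)) = \<mu> n \<and>
             \<phi> (fst (cpow L R p ta n)) + \<Phi> (snd (cpow L R p ta n)) = \<mu> n - \<tau> n"
    unfolding cp using t snd_final[of a n] by (simp add: fst_Rp pp_def mu_def)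
qed

end
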